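(* Let $\tau^+\colon\underline{\mathscr{C}}\to\underline{\mathscr{C}}^+$ be a left adjoint of the inclusion functor $\underline{\mathscr{C}}^+\hookrightarrow\underline{\mathscr{C}}$. For $C\in\mathscr{C}$, let $Z_C$ be obtained as follows: choose a distinguished triangle $V\to U\overset{a}{\to}C\to V[1]$ with $U\in\mathcal{U},V\in\mathcal{V}$; choose a distinguished triangle $T[-1]\to S[-1]\overset{b}{\to}U\to T$ with $S\in\mathcal{S},T\in\mathcal{T}$; and choose a distinguished triangle $S[-1]\overset{a\circ b}{\to}C\overset{z_C}{\to}Z_C\to S$. Then the following are equivalent: (1) $\tau^+(C)=0$; (2) $Z_C\in\mathcal{W}$; (3) $C\in\mathcal{U}$.
   Context: $\mathscr{C}$ is a triangulated category with shift $[1]$; subcategories are full, additive, closed under isomorphisms and direct summands. $\mathrm{Ext}^1(X,Y)=\mathscr{C}(X,Y[1])$. $\mathcal{M}\ast\mathcal{N}$ is the full subcategory of objects $C$ admitting a distinguished triangle $M\to C\to N\to M[1]$ with $M\in\mathcal{M}$, $N\in\mathcal{N}$. A cotorsion pair $(\mathcal{U},\mathcal{V})$: $\mathrm{Ext}^1(\mathcal{U},\mathcal{V})=0$ and $\mathscr{C}=\mathcal{U}\ast\mathcal{V}[1]$. Fix a twin cotorsion pair, i.e. cotorsion pairs $(\mathcal{S},\mathcal{T}),(\mathcal{U},\mathcal{V})$ with $\mathrm{Ext}^1(\mathcal{S},\mathcal{V})=0$. Put $\mathcal{W}=\mathcal{T}\cap\mathcal{U}$, $\mathscr{C}^+=\mathcal{W}\ast\mathcal{V}[1]$.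 $\underline{\mathscr{C}}$ and $\underline{\mathscr{C}}^+$ are the ideal quotients of $\mathscr{C}$ and $\mathscr{C}^+$ by morphisms factoring through objects of $\mathcal{W}$ (such a left adjoint $\tau^+$ exists). *)

theory Defs
  imports Main
begin

text \<open>A category with morphisms of type 'm between objects of type 'o,
  given by hom-sets; composition cmp g f means g after f.  Additive structure on
  hom-sets, a shift functor (shO on objects, shM on morphisms), and the class of
  distinguished triangles dist X Y Z f g h for X -f-> Y -g-> Z -h-> X[1].\<close>

record ('o, 'm) tcat =
  Ob    :: "'o set"
  Hom   :: "'o \<Rightarrow> 'o \<Rightarrow> 'm set"
  cmp   :: "'m \<Rightarrow> 'm \<Rightarrow> 'm"
  idm   :: "'o \<Rightarrow> 'm"
  madd  :: "'m \<Rightarrow> 'm \<Rightarrow> 'm"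
  mneg  :: "'m \<Rightarrow> 'm"
  mzero :: "'o \<Rightarrow> 'o \<Rightarrow> 'm"
  shO   :: "'o \<Rightarrow> 'o"
  shM   :: "'m \<Rightarrow> 'm"
  dist  :: "'o \<Rightarrow> 'o \<Rightarrow> 'o \<Rightarrow> 'm \<Rightarrow> 'm \<Rightarrow> 'm \<Rightarrow> bool"

definition is_iso :: "('o,'m) tcat \<Rightarrow> 'o \<Rightarrow> 'o \<Rightarrow> 'm \<Rightarrow> bool" where
  "is_iso K X Y f \<longleftrightarrow> f \<in> Hom K X Y \<and>
     (\<exists>g \<in> Hom K Y X. cmp K g f = idm K X \<and> cmp K f g = idm K Y)"

definition isomorphic :: "('o,'m) tcat \<Rightarrow> 'o \<Rightarrow> 'o \<Rightarrow> bool" where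
  "isomorphic K X Y \<longleftrightarrow> (\<exists>f. is_iso K X Y f)"

definition is_zero_obj :: "('o,'m) tcat \<Rightarrow> 'o \<Rightarrow> bool" where
  "is_zero_obj K Z \<longleftrightarrow> Z \<in> Ob K \<and> idm K Z = mzero K Z Z"

definition is_biprod :: "('o,'m) tcat \<Rightarrow> 'o \<Rightarrow> 'o \<Rightarrow> 'o \<Rightarrow> 'm \<Rightarrow> 'm \<Rightarrow> 'm \<Rightarrow> 'm \<Rightarrow> bool" where
  "is_biprod K A B P i1 i2 p1 p2 \<longleftrightarrow>
     i1 \<in> Hom K A P \<and> i2 \<in> Hom K B P \<and> p1 \<in> Hom K P A \<and> p2 \<in> Hom K P B \<and>
     cmp K p1 i1 = idm K A \<and> cmp K p2 i2 = idm K B \<and>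
     cmp K p1 i2 = mzero K B A \<and> cmp K p2 i1 = mzero K A B \<and>
     madd K (cmp K i1 p1) (cmp K i2 p2) = idm K P"

locale triangulated =
  fixes K :: "('o, 'm) tcat"
  assumes hom_obj: "f \<in> Hom K X Y \<Longrightarrow> X \<in> Ob K \<and> Y \<in> Ob K"
    and idm_hom: "X \<in> Ob K \<Longrightarrow> idm K X \<in> Hom K X X"
    and cmp_hom: "\<lbrakk>f \<in> Hom K X Y; g \<in> Hom K Y Z\<rbrakk> \<Longrightarrow> cmp K g f \<in> Hom K X Z"
    and cmp_assoc: "\<lbrakk>f \<in> Hom K X Y; g \<in> Hom K Y Z; h \<in> Hom K Z W\<rbrakk>
        \<Longrightarrow> cmp K h (cmp K g f) = cmp K (cmp K h g) f"
    and idm_left: "f \<in> Hom K X Y \<Longrightarrow> cmp K (idm K Y) f = f"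
    and idm_right: "f \<in> Hom K X Y \<Longrightarrow> cmp K f (idm K X) = f"
    and zero_hom: "\<lbrakk>X \<in> Ob K; Y \<in> Ob K\<rbrakk> \<Longrightarrow> mzero K X Y \<in> Hom K X Y"
    and add_hom: "\<lbrakk>f \<in> Hom K X Y; g \<in> Hom K X Y\<rbrakk> \<Longrightarrow> madd K f g \<in> Hom K X Y"
    and neg_hom: "f \<in> Hom K X Y \<Longrightarrow> mneg K f \<in> Hom K X Y"
    and add_assoc: "\<lbrakk>f \<in> Hom K X Y; g \<in> Hom K X Y; h \<in> Hom K X Y\<rbrakk>
        \<Longrightarrow> madd K (madd K f g) h = madd K f (madd K g h)"
    and add_comm: "\<lbrakk>f \<in> Hom K X Y; g \<in> Hom K X Y\<rbrakk> \<Longrightarrow> madd K f g = madd K g f"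
    and add_zero: "f \<in> Hom K X Y \<Longrightarrow> madd K f (mzero K X Y) = f"
    and add_neg: "f \<in> Hom K X Y \<Longrightarrow> madd K f (mneg K f) = mzero K X Y"
    and cmp_add_left: "\<lbrakk>f \<in> Hom K X Y; g \<in> Hom K X Y; h \<in> Hom K Y Z\<rbrakk>
        \<Longrightarrow> cmp K h (madd K f g) = madd K (cmp K h f) (cmp K h g)"
    and cmp_add_right: "\<lbrakk>f \<in> Hom K Y Z; g \<in> Hom K Y Z; h \<in> Hom K X Y\<rbrakk>
        \<Longrightarrow> cmp K (madd K f g) h = madd K (cmp K f h) (cmp K g h)"
    and zero_obj_ex: "\<exists>Z. is_zero_obj K Z"
    and biprod_ex: "\<lbrakk>A \<in> Ob K; B \<in> Ob K\<rbrakk> \<Longrightarrow> \<exists>P i1 i2 p1 p2. is_biprod K A B P i1 i2 p1 p2"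
    and sh_obj: "X \<in> Ob K \<Longrightarrow> shO K X \<in> Ob K"
    and sh_hom_bij: "\<lbrakk>X \<in> Ob K; Y \<in> Ob K\<rbrakk> \<Longrightarrow>
        bij_betw (shM K) (Hom K X Y) (Hom K (shO K X) (shO K Y))"
    and sh_cmp: "\<lbrakk>f \<in> Hom K X Y; g \<in> Hom K Y Z\<rbrakk> \<Longrightarrow> shM K (cmp K g f) = cmp K (shM K g) (shM K f)"
    and sh_idm: "X \<in> Ob K \<Longrightarrow> shM K (idm K X) = idm K (shO K X)"
    and sh_add: "\<lbrakk>f \<in> Hom K X Y; g \<in> Hom K X Y\<rbrakk> \<Longrightarrow> shM K (madd K f g) = madd K (shM K f) (shM K g)"
    and sh_ess_surj: "Y \<in> Ob K \<Longrightarrow> \<exists>X \<in> Ob K. isomorphic K (shO K X) Y"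
    and dist_hom: "dist K X Y Z f g h \<Longrightarrow>
        f \<in> Hom K X Y \<and> g \<in> Hom K Y Z \<and> h \<in> Hom K Z (shO K X)"
    and TR1_iso: "\<lbrakk>dist K X Y Z f g h; f' \<in> Hom K X' Y'; g' \<in> Hom K Y' Z'; h' \<in> Hom K Z' (shO K X');
        is_iso K X X' u; is_iso K Y Y' v; is_iso K Z Z' w;
        cmp K f' u = cmp K v f; cmp K g' v = cmp K w g; cmp K h' w = cmp K (shM K u) h\<rbrakk>
        \<Longrightarrow> dist K X' Y' Z' f' g' h'"
    and TR1_id: "\<lbrakk>X \<in> Ob K; is_zero_obj K Z\<rbrakk>
        \<Longrightarrow> dist K X X Z (idm K X) (mzero K X Z) (mzero K Z (shO K X))"
    and TR1_ex: "f \<in> Hom K X Y \<Longrightarrow> \<exists>Z g h. dist K X Y Z f g h"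
    and TR2: "\<lbrakk>f \<in> Hom K X Y; g \<in> Hom K Y Z; h \<in> Hom K Z (shO K X)\<rbrakk> \<Longrightarrow>
        dist K X Y Z f g h \<longleftrightarrow> dist K Y Z (shO K X) g h (mneg K (shM K f))"
    and TR3: "\<lbrakk>dist K X Y Z f g h; dist K X' Y' Z' f' g' h';
        u \<in> Hom K X X'; v \<in> Hom K Y Y'; cmp K f' u = cmp K v f\<rbrakk>
        \<Longrightarrow> \<exists>w \<in> Hom K Z Z'. cmp K w g = cmp K g' v \<and> cmp K (shM K u) h = cmp K h' w"
    and TR4: "\<lbrakk>dist K X Y Z' f i i'; dist K Y Z X' g j j'; dist K X Z Y' (cmp K g f) k k'\<rbrakk>
        \<Longrightarrow> \<exists>u v. dist K Z' Y' X' u v (cmp K (shM K i) j') \<and>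
             cmp K u i = cmp K k g \<and> cmp K k' u = i' \<and>
             cmp K v k = j \<and> cmp K j' v = cmp K (shM K f) k'"

definition subcat :: "('o,'m) tcat \<Rightarrow> 'o set \<Rightarrow> bool" where
  "subcat K S \<longleftrightarrow> S \<subseteq> Ob K \<and>
     (\<forall>X Y. X \<in> S \<and> isomorphic K X Y \<longrightarrow> Y \<in> S) \<and>
     (\<exists>Z \<in> S. is_zero_obj K Z) \<and>
     (\<forall>A B P i1 i2 p1 p2. is_biprod K A B P i1 i2 p1 p2 \<longrightarrow> (P \<in> S \<longleftrightarrow> A \<in> S \<and> B \<in> S))"

definition shift_sub :: "('o,'m) tcat \<Rightarrow> 'o set \<Rightarrow> 'o set" where
  "shift_sub K M = {N. \<exists>X \<in> M. isomorphic K (shO K X) N}"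

definition ext_star :: "('o,'m) tcat \<Rightarrow> 'o set \<Rightarrow> 'o set \<Rightarrow> 'o set" where
  "ext_star K M N = {C. \<exists>A B f g h. A \<in> M \<and> B \<in> N \<and> dist K A C B f g h}"

definition ext1_zero :: "('o,'m) tcat \<Rightarrow> 'o set \<Rightarrow> 'o set \<Rightarrow> bool" where
  "ext1_zero K M N \<longleftrightarrow> (\<forall>X \<in> M. \<forall>Y \<in> N. Hom K X (shO K Y) = {mzero K X (shO K Y)})"

definition cotorsion_pair :: "('o,'m) tcat \<Rightarrow> 'o set \<Rightarrow> 'o set \<Rightarrow> bool" where
  "cotorsion_pair K U V \<longleftrightarrow> subcat K U \<and> subcat K V \<and> ext1_zero K U V \<and>
     Ob K = ext_star K U (shift_sub K V)"

definition twin_cotorsion_pair ::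
  "('o,'m) tcat \<Rightarrow> 'o set \<Rightarrow> 'o set \<Rightarrow> 'o set \<Rightarrow> 'o set \<Rightarrow> bool" where
  "twin_cotorsion_pair K S T U V \<longleftrightarrow>
     cotorsion_pair K S T \<and> cotorsion_pair K U V \<and> ext1_zero K S V"

definition factors_through :: "('o,'m) tcat \<Rightarrow> 'o set \<Rightarrow> 'o \<Rightarrow> 'o \<Rightarrow> 'm \<Rightarrow> bool" where
  "factors_through K W X Y f \<longleftrightarrow>
     (\<exists>Wo \<in> W. \<exists>p \<in> Hom K X Wo. \<exists>q \<in> Hom K Wo Y. f = cmp K q p)"

definition quot_eq :: "('o,'m) tcat \<Rightarrow> 'o set \<Rightarrow> 'o \<Rightarrow> 'o \<Rightarrow> 'm \<Rightarrow> 'm \<Rightarrow> bool" where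
  "quot_eq K W X Y f g \<longleftrightarrow> factors_through K W X Y (madd K f (mneg K g))"

definition quot_zero_obj :: "('o,'m) tcat \<Rightarrow> 'o set \<Rightarrow> 'o \<Rightarrow> bool" where
  "quot_zero_obj K W X \<longleftrightarrow> X \<in> Ob K \<and> quot_eq K W X X (idm K X) (mzero K X X)"

text \<open>(tau, eta) is a left adjoint of the inclusion of the quotient of the full
  subcategory Cp into the quotient of the whole category (both by W), given by
  its object map tau and unit eta (universal arrows).\<close>
definition left_adjoint_incl ::
  "('o,'m) tcat \<Rightarrow> 'o set \<Rightarrow> 'o set \<Rightarrow> ('o \<Rightarrow> 'o) \<Rightarrow> ('o \<Rightarrow> 'm) \<Rightarrow> bool" where
  "left_adjoint_incl K W Cp tau eta \<longleftrightarrow>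
     (\<forall>C \<in> Ob K. tau C \<in> Cp \<and> eta C \<in> Hom K C (tau C) \<and>
        (\<forall>X \<in> Cp. \<forall>f \<in> Hom K C X.
           \<exists>g \<in> Hom K (tau C) X. quot_eq K W C X (cmp K g (eta C)) f \<and>
             (\<forall>g' \<in> Hom K (tau C) X. quot_eq K W C X (cmp K g' (eta C)) f
                 \<longrightarrow> quot_eq K W (tau C) X g' g)))"

end

theory Submission
  imports Defs
begin
context triangulated begin

lemma obX: "f \<in> Hom K X Y \<Longrightarrow> X \<in> Ob K" using hom_obj by blast
lemma obY: "f \<in> Hom K X Y \<Longrightarrow> Y \<in> Ob K" using hom_obj by blast

lemma add_idem_zero: assumes "c \<in> Hom K X Y" "madd K c c = c" shows "c = mzero K X Y"
proof -
  have n: "mneg K c \<in> Hom K X Y" using neg_hom assms(1) by blast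
  have "mzero K X Y = madd K c (mneg K c)" using add_neg assms(1) by simp
  also have "\<dots> = madd K (madd K c c) (mneg K c)" using assms(2) by simp
  also have "\<dots> = madd K c (madd K c (mneg K c))" using add_assoc[OF assms(1) assms(1) n] by simp
  also have "\<dots> = madd K c (mzero K X Y)" using add_neg assms(1) by simp
  also have "\<dots> = c" using add_zero assms(1) by simp
  finally show ?thesis by simp
qed

lemma cmp_zero_right: assumes "f \<in> Hom K Y Z" "X \<in> Ob K" shows "cmp K f (mzero K X Y) = mzero K X Z"
proof -
  have Y: "Y \<in> Ob K" using assms obX by blast
  have z: "mzero K X Y \<in> Hom K X Y" using zero_hom assms(2) Y by blast
  have "madd K (mzero K X Y) (mzero K X Y) = mzero K X Y" using add_zero z by blast
  hence "cmp K f (mzero K X Y) = madd K (cmp K f (mzero K X Y)) (cmp K f (mzero K X Y))"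
    using cmp_add_left[OF z z assms(1)] by simp
  thus ?thesis using add_idem_zero cmp_hom[OF z assms(1)] by metis
qed

lemma cmp_zero_left: assumes "f \<in> Hom K X Y" "Z \<in> Ob K" shows "cmp K (mzero K Y Z) f = mzero K X Z"
proof -
  have Y: "Y \<in> Ob K" using assms obY by blast
  have z: "mzero K Y Z \<in> Hom K Y Z" using zero_hom assms(2) Y by blast
  have "madd K (mzero K Y Z) (mzero K Y Z) = mzero K Y Z" using add_zero z by blast
  hence "cmp K (mzero K Y Z) f = madd K (cmp K (mzero K Y Z) f) (cmp K (mzero K Y Z) f)"
    using cmp_add_right[OF z z assms(1)] by simp
  thus ?thesis using add_idem_zero cmp_hom[OF assms(1) z] by metis
qed

lemma add_zero_left: "f \<in> Hom K X Y \<Longrightarrow> madd K (mzero K X Y) f = f"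
  by (metis add_comm add_zero zero_hom obX obY)

lemma neg_unique: assumes "f \<in> Hom K X Y" "g \<in> Hom K X Y" "madd K f g = mzero K X Y" shows "g = mneg K f"
proof -
  have n: "mneg K f \<in> Hom K X Y" using neg_hom assms(1) by blast
  have "g = madd K g (mzero K X Y)" using add_zero assms by simp
  also have "\<dots> = madd K g (madd K f (mneg K f))" using add_neg assms by simp
  also have "\<dots> = madd K (madd K g f) (mneg K f)" using add_assoc[OF assms(2) assms(1) n] by simp
  also have "\<dots> = madd K (mzero K X Y) (mneg K f)" using add_comm assms by simp
  also have "\<dots> = mneg K f" using add_zero_left n by simp
  finally show ?thesis .
qed

lemma neg_neg: assumes "f \<in> Hom K X Y" shows "mneg K (mneg K f) = f"
proof -
  have n: "mneg K f \<in> Hom K X Y" using neg_hom assms(1) by blast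
  have "madd K (mneg K f) f = mzero K X Y" using add_comm[OF n assms] add_neg[OF assms] by simp
  thus ?thesis using neg_unique[OF n assms] by simp
qed

lemma neg_zero: assumes "X \<in> Ob K" "Y \<in> Ob K" shows "mneg K (mzero K X Y) = mzero K X Y"
proof -
  have z: "mzero K X Y \<in> Hom K X Y" using zero_hom assms by blast
  show ?thesis using neg_unique[OF z z] add_zero[OF z] by simp
qed

lemma neg_inj: assumes "f \<in> Hom K X Y" "g \<in> Hom K X Y" "mneg K f = mneg K g" shows "f = g"
  using neg_neg assms by metis

lemma cmp_neg_left: assumes "f \<in> Hom K Y Z" "g \<in> Hom K X Y" shows "cmp K (mneg K f) g = mneg K (cmp K f g)"
proof -
  have n: "mneg K f \<in> Hom K Y Z" using neg_hom assms(1) by blast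
  have X: "X \<in> Ob K" using assms obX by blast
  have "madd K (cmp K f g) (cmp K (mneg K f) g) = cmp K (madd K f (mneg K f)) g"
    using cmp_add_right[OF assms(1) n assms(2)] by simp
  also have "\<dots> = mzero K X Z" using add_neg[OF assms(1)] cmp_zero_left[OF assms(2)] obY[OF assms(1)] by simp
  finally show ?thesis using neg_unique cmp_hom assms n by metis
qed

lemma cmp_neg_right: assumes "f \<in> Hom K Y Z" "g \<in> Hom K X Y" shows "cmp K f (mneg K g) = mneg K (cmp K f g)"
proof -
  have n: "mneg K g \<in> Hom K X Y" using neg_hom assms(2) by blast
  have "madd K (cmp K f g) (cmp K f (mneg K g)) = cmp K f (madd K g (mneg K g))"
    using cmp_add_left[OF assms(2) n assms(1)] by simp
  also have "\<dots> = mzero K X Z" using add_neg[OF assms(2)] cmp_zero_right[OF assms(1)] obX[OF assms(2)] by simp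
  finally show ?thesis using neg_unique cmp_hom assms n by metis
qed

lemma sh_hom: "f \<in> Hom K X Y \<Longrightarrow> shM K f \<in> Hom K (shO K X) (shO K Y)"
  using bij_betw_apply[OF sh_hom_bij] obX obY by metis

lemma sh_surj: assumes "g \<in> Hom K (shO K X) (shO K Y)" "X \<in> Ob K" "Y \<in> Ob K"
  shows "\<exists>f \<in> Hom K X Y. g = shM K f"
  using sh_hom_bij[OF assms(2,3)] assms(1) unfolding bij_betw_def by blast

lemma sh_inj: assumes "f \<in> Hom K X Y" "g \<in> Hom K X Y" "shM K f = shM K g" shows "f = g"
  using sh_hom_bij[OF obX[OF assms(1)] obY[OF assms(1)]] assms unfolding bij_betw_def inj_on_def by blast

lemma sh_zero: assumes "X \<in> Ob K" "Y \<in> Ob K" shows "shM K (mzero K X Y) = mzero K (shO K X) (shO K Y)"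
proof -
  have z: "mzero K X Y \<in> Hom K X Y" using zero_hom assms by blast
  have "shM K (mzero K X Y) = madd K (shM K (mzero K X Y)) (shM K (mzero K X Y))"
    using sh_add[OF z z] add_zero[OF z] by simp
  thus ?thesis using add_idem_zero sh_hom[OF z] by metis
qed

lemma sh_neg: assumes "f \<in> Hom K X Y" shows "shM K (mneg K f) = mneg K (shM K f)"
proof -
  have n: "mneg K f \<in> Hom K X Y" using neg_hom assms by blast
  have "madd K (shM K f) (shM K (mneg K f)) = shM K (mzero K X Y)"
    using sh_add[OF assms n] add_neg[OF assms] by simp
  also have "\<dots> = mzero K (shO K X) (shO K Y)" using sh_zero obX obY assms by blast
  finally show ?thesis using neg_unique sh_hom assms n by metis
qed


lemma iso_sym: "isomorphic K X Y \<Longrightarrow> isomorphic K Y X"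
  unfolding isomorphic_def is_iso_def by blast

lemma dist_obs: "dist K X Y Z f g h \<Longrightarrow> X \<in> Ob K \<and> Y \<in> Ob K \<and> Z \<in> Ob K"
  using dist_hom obX obY by metis

lemma rot: assumes "dist K X Y Z f g h" shows "dist K Y Z (shO K X) g h (mneg K (shM K f))"
  using TR2 dist_hom assms by blast

lemma zero_sh: assumes "is_zero_obj K Z" shows "is_zero_obj K (shO K Z)"
proof -
  have Z: "Z \<in> Ob K" using assms unfolding is_zero_obj_def by blast
  have "idm K (shO K Z) = shM K (idm K Z)" using sh_idm Z by simp
  also have "\<dots> = shM K (mzero K Z Z)" using assms unfolding is_zero_obj_def by simp
  also have "\<dots> = mzero K (shO K Z) (shO K Z)" using sh_zero Z by blast
  finally show ?thesis unfolding is_zero_obj_def using sh_obj Z by blast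
qed

lemma dist_zero_first: assumes "X \<in> Ob K" "is_zero_obj K Z0"
  shows "dist K Z0 X X (mzero K Z0 X) (idm K X) (mzero K X (shO K Z0))"
proof -
  have Z0: "Z0 \<in> Ob K" using assms(2) unfolding is_zero_obj_def by blast
  have d: "dist K X X (shO K Z0) (idm K X) (mzero K X (shO K Z0)) (mzero K (shO K Z0) (shO K X))"
    using TR1_id[OF assms(1) zero_sh[OF assms(2)]] .
  have e: "mneg K (shM K (mzero K Z0 X)) = mzero K (shO K Z0) (shO K X)"
    using sh_zero[OF Z0 assms(1)] neg_zero sh_obj Z0 assms(1) by simp
  have h1: "mzero K Z0 X \<in> Hom K Z0 X" using zero_hom Z0 assms(1) by blast
  have h2: "idm K X \<in> Hom K X X" using idm_hom assms(1) by blast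
  have h3: "mzero K X (shO K Z0) \<in> Hom K X (shO K Z0)" using zero_hom sh_obj Z0 assms(1) by blast
  show ?thesis using TR2[OF h1 h2 h3] d e by simp
qed

lemma dist_zero_second: assumes "X \<in> Ob K" "is_zero_obj K Z0"
  shows "dist K X Z0 (shO K X) (mzero K X Z0) (mzero K Z0 (shO K X)) (mneg K (idm K (shO K X)))"
  using rot[OF TR1_id[OF assms]] sh_idm assms(1) by simp

lemma comp_zero: assumes "dist K X Y Z f g h" shows "cmp K g f = mzero K X Z"
proof -
  obtain Z0 where z: "is_zero_obj K Z0" using zero_obj_ex by blast
  have hs: "f \<in> Hom K X Y" "g \<in> Hom K Y Z" "h \<in> Hom K Z (shO K X)" using dist_hom assms by auto
  have X: "X \<in> Ob K" using obX hs(1) by blast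
  obtain w where w: "w \<in> Hom K Z0 Z" "cmp K w (mzero K X Z0) = cmp K g f"
    using TR3[OF TR1_id[OF X z] assms idm_hom[OF X] hs(1)] by blast
  show ?thesis using w cmp_zero_right X by metis
qed

lemma comp_zero3: assumes "dist K X Y Z f g h" shows "cmp K (shM K f) h = mzero K Z (shO K Y)"
proof -
  have hs: "f \<in> Hom K X Y" "g \<in> Hom K Y Z" "h \<in> Hom K Z (shO K X)" using dist_hom assms by auto
  have "cmp K (mneg K (shM K f)) h = mzero K Z (shO K Y)" using comp_zero[OF rot[OF rot[OF assms]]] .
  hence "mneg K (cmp K (shM K f) h) = mzero K Z (shO K Y)" using cmp_neg_left[OF sh_hom[OF hs(1)] hs(3)] by simp
  hence "mneg K (mneg K (cmp K (shM K f) h)) = mneg K (mzero K Z (shO K Y))" by simp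
  thus ?thesis using neg_neg[OF cmp_hom[OF hs(3) sh_hom[OF hs(1)]]] neg_zero obX[OF hs(3)] sh_obj obY[OF hs(1)] by simp
qed

lemma weak_coker: assumes "dist K X Y Z f g h" "\<phi> \<in> Hom K Y W" "cmp K \<phi> f = mzero K X W"
  shows "\<exists>\<psi> \<in> Hom K Z W. cmp K \<psi> g = \<phi>"
proof -
  obtain Z0 where z: "is_zero_obj K Z0" using zero_obj_ex by blast
  have Z0: "Z0 \<in> Ob K" using z unfolding is_zero_obj_def by blast
  have hs: "f \<in> Hom K X Y" "g \<in> Hom K Y Z" "h \<in> Hom K Z (shO K X)" using dist_hom assms by auto
  have X: "X \<in> Ob K" using obX hs(1) by blast
  have W: "W \<in> Ob K" using obY assms(2) by blast
  have u: "mzero K X Z0 \<in> Hom K X Z0" using zero_hom X Z0 by blast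
  have c: "cmp K (mzero K Z0 W) (mzero K X Z0) = cmp K \<phi> f" using cmp_zero_left[OF u W] assms(3) by simp
  obtain w where "w \<in> Hom K Z W" "cmp K w g = cmp K (idm K W) \<phi>"
    using TR3[OF assms(1) dist_zero_first[OF W z] u assms(2) c] by blast
  thus ?thesis using idm_left assms(2) by auto
qed

lemma weak_ker: assumes "dist K X Y Z f g h" "\<phi> \<in> Hom K W Y" "cmp K g \<phi> = mzero K W Z"
  shows "\<exists>\<psi> \<in> Hom K W X. cmp K f \<psi> = \<phi>"
proof -
  obtain Z0 where z: "is_zero_obj K Z0" using zero_obj_ex by blast
  have Z0: "Z0 \<in> Ob K" using z unfolding is_zero_obj_def by blast
  have hs: "f \<in> Hom K X Y" "g \<in> Hom K Y Z" "h \<in> Hom K Z (shO K X)" using dist_hom assms by auto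
  have X: "X \<in> Ob K" using obX hs(1) by blast
  have Z: "Z \<in> Ob K" using obY hs(2) by blast
  have W: "W \<in> Ob K" using obX assms(2) by blast
  have v: "mzero K Z0 Z \<in> Hom K Z0 Z" using zero_hom Z Z0 by blast
  have u0: "mzero K W Z0 \<in> Hom K W Z0" using zero_hom W Z0 by blast
  have c: "cmp K g \<phi> = cmp K (mzero K Z0 Z) (mzero K W Z0)" using cmp_zero_left[OF u0 Z] assms(3) by simp
  obtain w where w: "w \<in> Hom K (shO K W) (shO K X)"
     "cmp K (shM K \<phi>) (mneg K (idm K (shO K W))) = cmp K (mneg K (shM K f)) w"
    using TR3[OF dist_zero_second[OF W z] rot[OF assms(1)] assms(2) v c] by blast
  have sW: "shO K W \<in> Ob K" using sh_obj W by blast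
  have l: "cmp K (shM K \<phi>) (mneg K (idm K (shO K W))) = mneg K (shM K \<phi>)"
    using cmp_neg_right[OF sh_hom[OF assms(2)] idm_hom[OF sW]] idm_right[OF sh_hom[OF assms(2)]] by simp
  have r: "cmp K (mneg K (shM K f)) w = mneg K (cmp K (shM K f) w)"
    using cmp_neg_left[OF sh_hom[OF hs(1)] w(1)] .
  have e: "shM K \<phi> = cmp K (shM K f) w"
    using neg_inj[OF sh_hom[OF assms(2)] cmp_hom[OF w(1) sh_hom[OF hs(1)]]] w(2) l r by simp
  obtain \<psi> where p: "\<psi> \<in> Hom K W X" "w = shM K \<psi>" using sh_surj[OF w(1) W X] by blast
  have "shM K \<phi> = shM K (cmp K f \<psi>)" using e p sh_cmp[OF p(1) hs(1)] by simp
  hence "\<phi> = cmp K f \<psi>" using sh_inj[OF assms(2) cmp_hom[OF p(1) hs(1)]] by simp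
  thus ?thesis using p(1) by blast
qed


lemma split_mono: assumes d: "dist K A B C f g h" and r: "r \<in> Hom K B A" "cmp K r f = idm K A"
  shows "\<exists>s. is_biprod K A C B f s r g"
proof -
  have hs: "f \<in> Hom K A B" "g \<in> Hom K B C" "h \<in> Hom K C (shO K A)" using dist_hom d by auto
  have A: "A \<in> Ob K" and B: "B \<in> Ob K" and C: "C \<in> Ob K" using hs obX obY by blast+
  have h0: "h = mzero K C (shO K A)"
  proof -
    have "h = cmp K (idm K (shO K A)) h" using idm_left hs(3) by simp
    also have "\<dots> = cmp K (shM K (cmp K r f)) h" using r(2) sh_idm A by simp
    also have "\<dots> = cmp K (cmp K (shM K r) (shM K f)) h" using sh_cmp[OF hs(1) r(1)] by simp
    also have "\<dots> = cmp K (shM K r) (cmp K (shM K f) h)"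
      using cmp_assoc[OF hs(3) sh_hom[OF hs(1)] sh_hom[OF r(1)]] by simp
    also have "\<dots> = cmp K (shM K r) (mzero K C (shO K B))" using comp_zero3[OF d] by simp
    also have "\<dots> = mzero K C (shO K A)" using cmp_zero_right[OF sh_hom[OF r(1)] C] by simp
    finally show ?thesis .
  qed
  have hid: "cmp K h (idm K C) = mzero K C (shO K A)" using idm_right[OF hs(3)] h0 by simp
  obtain s0 where s0: "s0 \<in> Hom K C B" "cmp K g s0 = idm K C"
    using weak_ker[OF rot[OF d] idm_hom[OF C] hid] by blast
  define rs0 where "rs0 = cmp K r s0"
  have rs0h: "rs0 \<in> Hom K C A" using cmp_hom[OF s0(1) r(1)] rs0_def by simp
  define frs0 where "frs0 = cmp K f rs0"
  have frs0h: "frs0 \<in> Hom K C B" using cmp_hom[OF rs0h hs(1)] frs0_def by simp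
  define s where "s = madd K s0 (mneg K frs0)"
  have sh: "s \<in> Hom K C B" using add_hom[OF s0(1) neg_hom[OF frs0h]] s_def by simp
  have gf: "cmp K g f = mzero K A C" using comp_zero[OF d] .
  have gfrs0: "cmp K g frs0 = mzero K C C"
    using cmp_assoc[OF rs0h hs(1) hs(2)] gf cmp_zero_left[OF rs0h C] frs0_def by simp
  have gs: "cmp K g s = idm K C"
  proof -
    have "cmp K g s = madd K (cmp K g s0) (cmp K g (mneg K frs0))"
      using cmp_add_left[OF s0(1) neg_hom[OF frs0h] hs(2)] s_def by simp
    also have "\<dots> = madd K (idm K C) (mneg K (mzero K C C))"
      using cmp_neg_right[OF hs(2) frs0h] gfrs0 s0(2) by simp
    also have "\<dots> = idm K C" using neg_zero[OF C C] add_zero[OF idm_hom[OF C]] by simp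
    finally show ?thesis .
  qed
  have rfrs0: "cmp K r frs0 = rs0"
    using cmp_assoc[OF rs0h hs(1) r(1)] r(2) idm_left[OF rs0h] frs0_def by simp
  have rs: "cmp K r s = mzero K C A"
  proof -
    have "cmp K r s = madd K (cmp K r s0) (cmp K r (mneg K frs0))"
      using cmp_add_left[OF s0(1) neg_hom[OF frs0h] r(1)] s_def by simp
    also have "\<dots> = madd K rs0 (mneg K rs0)"
      using cmp_neg_right[OF r(1) frs0h] rfrs0 rs0_def by simp
    also have "\<dots> = mzero K C A" using add_neg[OF rs0h] by simp
    finally show ?thesis .
  qed
  have fr: "cmp K f r \<in> Hom K B B" using cmp_hom[OF r(1) hs(1)] .
  have sg: "cmp K s g \<in> Hom K B B" using cmp_hom[OF hs(2) sh] .
  define x where "x = madd K (cmp K f r) (cmp K s g)"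
  have xh: "x \<in> Hom K B B" using add_hom[OF fr sg] x_def by simp
  define dd where "dd = madd K (idm K B) (mneg K x)"
  have ddh: "dd \<in> Hom K B B" using add_hom[OF idm_hom[OF B] neg_hom[OF xh]] dd_def by simp
  have xf: "cmp K x f = f"
  proof -
    have "cmp K x f = madd K (cmp K (cmp K f r) f) (cmp K (cmp K s g) f)"
      using cmp_add_right[OF fr sg hs(1)] x_def by simp
    also have "\<dots> = madd K f (mzero K A B)"
      using cmp_assoc[OF hs(1) r(1) hs(1)] cmp_assoc[OF hs(1) hs(2) sh] r(2) gf
        idm_right[OF hs(1)] cmp_zero_right[OF sh A] by simp
    also have "\<dots> = f" using add_zero[OF hs(1)] .
    finally show ?thesis .
  qed
  have ddf: "cmp K dd f = mzero K A B"
  proof -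
    have "cmp K dd f = madd K (cmp K (idm K B) f) (cmp K (mneg K x) f)"
      using cmp_add_right[OF idm_hom[OF B] neg_hom[OF xh] hs(1)] dd_def by simp
    also have "\<dots> = madd K f (mneg K f)"
      using idm_left[OF hs(1)] cmp_neg_left[OF xh hs(1)] xf by simp
    also have "\<dots> = mzero K A B" using add_neg[OF hs(1)] .
    finally show ?thesis .
  qed
  obtain d' where d': "d' \<in> Hom K C B" "cmp K d' g = dd" using weak_coker[OF d ddh ddf] by blast
  have xs: "cmp K x s = s"
  proof -
    have "cmp K x s = madd K (cmp K (cmp K f r) s) (cmp K (cmp K s g) s)"
      using cmp_add_right[OF fr sg sh] x_def by simp
    also have "\<dots> = madd K (mzero K C B) s"
      using cmp_assoc[OF sh r(1) hs(1)] cmp_assoc[OF sh hs(2) sh] rs gs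
        idm_right[OF sh] cmp_zero_right[OF hs(1) C] by simp
    also have "\<dots> = s" using add_zero_left[OF sh] .
    finally show ?thesis .
  qed
  have dds: "cmp K dd s = mzero K C B"
  proof -
    have "cmp K dd s = madd K (cmp K (idm K B) s) (cmp K (mneg K x) s)"
      using cmp_add_right[OF idm_hom[OF B] neg_hom[OF xh] sh] dd_def by simp
    also have "\<dots> = madd K s (mneg K s)"
      using idm_left[OF sh] cmp_neg_left[OF xh sh] xs by simp
    also have "\<dots> = mzero K C B" using add_neg[OF sh] .
    finally show ?thesis .
  qed
  have d'0: "d' = mzero K C B"
  proof -
    have "d' = cmp K d' (cmp K g s)" using gs idm_right[OF d'(1)] by simp
    also have "\<dots> = cmp K dd s" using cmp_assoc[OF sh hs(2) d'(1)] d'(2) by simp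
    finally show ?thesis using dds by simp
  qed
  have dd0: "dd = mzero K B B" using d'(2) d'0 cmp_zero_left[OF hs(2) B] by simp
  have "mneg K x = mneg K (idm K B)"
    using neg_unique[OF idm_hom[OF B] neg_hom[OF xh]] dd0 dd_def by simp
  hence x1: "x = idm K B" using neg_inj[OF xh idm_hom[OF B]] by simp
  have "is_biprod K A C B f s r g"
    unfolding is_biprod_def using hs sh r gs rs gf x1 x_def by simp
  thus ?thesis by blast
qed

lemma retract_in: assumes "subcat K P" "Y \<in> P" "s \<in> Hom K X Y" "r \<in> Hom K Y X" "cmp K r s = idm K X"
  shows "X \<in> P"
proof -
  obtain C g h where d: "dist K X Y C s g h" using TR1_ex[OF assms(3)] by blast
  obtain s' where "is_biprod K X C Y s s' r g" using split_mono[OF d assms(4,5)] by blast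
  thus ?thesis using assms(1,2) unfolding subcat_def by blast
qed

lemma iso_zero_target: assumes x: "x \<in> Hom K X Y'" and i: "isomorphic K Y Y'"
  and z: "Hom K X Y = {mzero K X Y}" shows "x = mzero K X Y'"
proof -
  obtain e e' where e: "e \<in> Hom K Y Y'" "e' \<in> Hom K Y' Y" "cmp K e e' = idm K Y'"
    using i unfolding isomorphic_def is_iso_def by blast
  have ex: "cmp K e' x \<in> Hom K X Y" using cmp_hom[OF x e(2)] .
  have "x = cmp K (cmp K e e') x" using e(3) idm_left[OF x] by simp
  also have "\<dots> = cmp K e (cmp K e' x)" using cmp_assoc[OF x e(2) e(1)] by simp
  also have "\<dots> = cmp K e (mzero K X Y)" using ex z by simp
  also have "\<dots> = mzero K X Y'" using cmp_zero_right[OF e(1) obX[OF x]] .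
  finally show ?thesis .
qed

lemma iso_zero_source: assumes x: "x \<in> Hom K X' Y" and i: "isomorphic K X X'"
  and z: "Hom K X Y = {mzero K X Y}" shows "x = mzero K X' Y"
proof -
  obtain e e' where e: "e \<in> Hom K X X'" "e' \<in> Hom K X' X" "cmp K e e' = idm K X'"
    using i unfolding isomorphic_def is_iso_def by blast
  have ex: "cmp K x e \<in> Hom K X Y" using cmp_hom[OF e(1) x] .
  have "x = cmp K x (cmp K e e')" using e(3) idm_right[OF x] by simp
  also have "\<dots> = cmp K (cmp K x e) e'" using cmp_assoc[OF e(2) e(1) x] by simp
  also have "\<dots> = cmp K (mzero K X Y) e'" using ex z by simp
  also have "\<dots> = mzero K X' Y" using cmp_zero_left[OF e(2) obY[OF x]] .
  finally show ?thesis .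
qed

lemma charU: assumes cp: "cotorsion_pair K U V" and X: "X \<in> Ob K"
  and orth: "\<And>V'. V' \<in> V \<Longrightarrow> Hom K X (shO K V') = {mzero K X (shO K V')}"
  shows "X \<in> U"
proof -
  have "X \<in> ext_star K U (shift_sub K V)" using cp X unfolding cotorsion_pair_def by blast
  then obtain U1 B f g h where U1: "U1 \<in> U" "B \<in> shift_sub K V" and d: "dist K U1 X B f g h"
    unfolding ext_star_def by blast
  obtain V1 where V1: "V1 \<in> V" "isomorphic K (shO K V1) B" using U1(2) unfolding shift_sub_def by blast
  have hs: "f \<in> Hom K U1 X" "g \<in> Hom K X B" using dist_hom d by auto
  have g0: "g = mzero K X B" using iso_zero_target[OF hs(2) V1(2) orth[OF V1(1)]] .
  have gi: "cmp K g (idm K X) = mzero K X B" using idm_right[OF hs(2)] g0 by simp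
  obtain \<psi> where p: "\<psi> \<in> Hom K X U1" "cmp K f \<psi> = idm K X"
    using weak_ker[OF d idm_hom[OF X] gi] by blast
  have subU: "subcat K U" using cp unfolding cotorsion_pair_def by blast
  show ?thesis using retract_in[OF subU U1(1) p(1) hs(1) p(2)] .
qed

lemma U_ext: assumes cp: "cotorsion_pair K U V" and d: "dist K A B C f g h"
  and A: "A \<in> U" and C: "C \<in> U" shows "B \<in> U"
proof -
  have hs: "f \<in> Hom K A B" "g \<in> Hom K B C" using dist_hom d by auto
  have B: "B \<in> Ob K" using obY hs(1) by blast
  have e: "ext1_zero K U V" using cp unfolding cotorsion_pair_def by blast
  show ?thesis
  proof (rule charU[OF cp B])
    fix V' assume V': "V' \<in> V"
    have V'o: "V' \<in> Ob K" using cp V' unfolding cotorsion_pair_def subcat_def by blast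
    have zA: "Hom K A (shO K V') = {mzero K A (shO K V')}" using e A V' unfolding ext1_zero_def by blast
    have zC: "Hom K C (shO K V') = {mzero K C (shO K V')}" using e C V' unfolding ext1_zero_def by blast
    show "Hom K B (shO K V') = {mzero K B (shO K V')}"
    proof
      show "Hom K B (shO K V') \<subseteq> {mzero K B (shO K V')}"
      proof
        fix \<phi> assume p: "\<phi> \<in> Hom K B (shO K V')"
        have "cmp K \<phi> f = mzero K A (shO K V')" using zA cmp_hom[OF hs(1) p] by blast
        then obtain \<psi> where q: "\<psi> \<in> Hom K C (shO K V')" "cmp K \<psi> g = \<phi>" using weak_coker[OF d p] by blast
        have "\<psi> = mzero K C (shO K V')" using q(1) zC by blast
        thus "\<phi> \<in> {mzero K B (shO K V')}" using q(2) cmp_zero_left[OF hs(2)] sh_obj[OF V'o] by simp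
      qed
      show "{mzero K B (shO K V')} \<subseteq> Hom K B (shO K V')" using zero_hom B sh_obj[OF V'o] by blast
    qed
  qed
qed

lemma zero_iso: assumes "is_zero_obj K Z1" "is_zero_obj K Z2" shows "isomorphic K Z1 Z2"
proof -
  have o: "Z1 \<in> Ob K" "Z2 \<in> Ob K" using assms unfolding is_zero_obj_def by auto
  have h: "mzero K Z1 Z2 \<in> Hom K Z1 Z2" "mzero K Z2 Z1 \<in> Hom K Z2 Z1" using zero_hom o by auto
  have "cmp K (mzero K Z2 Z1) (mzero K Z1 Z2) = idm K Z1"
    using cmp_zero_left[OF h(1) o(1)] assms(1) unfolding is_zero_obj_def by simp
  moreover have "cmp K (mzero K Z1 Z2) (mzero K Z2 Z1) = idm K Z2"
    using cmp_zero_left[OF h(2) o(2)] assms(2) unfolding is_zero_obj_def by simp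
  ultimately show ?thesis unfolding isomorphic_def is_iso_def using h by blast
qed

lemma W_zero: assumes "subcat K T" "subcat K U" shows "\<exists>Z \<in> T \<inter> U. is_zero_obj K Z"
proof -
  obtain Z1 where z1: "Z1 \<in> U" "is_zero_obj K Z1" using assms(2) unfolding subcat_def by blast
  obtain Z2 where z2: "Z2 \<in> T" "is_zero_obj K Z2" using assms(1) unfolding subcat_def by blast
  have "Z1 \<in> T" using assms(1) z2(1) zero_iso[OF z2(2) z1(2)] unfolding subcat_def by blast
  thus ?thesis using z1 by blast
qed


lemma factor_add: assumes sT: "subcat K T" and sU: "subcat K U"
  and f: "factors_through K (T \<inter> U) X Y f" and g: "factors_through K (T \<inter> U) X Y g"
  shows "factors_through K (T \<inter> U) X Y (madd K f g)"
proof -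
  obtain W1 p1 q1 where w1: "W1 \<in> T \<inter> U" "p1 \<in> Hom K X W1" "q1 \<in> Hom K W1 Y" "f = cmp K q1 p1"
    using f unfolding factors_through_def by blast
  obtain W2 p2 q2 where w2: "W2 \<in> T \<inter> U" "p2 \<in> Hom K X W2" "q2 \<in> Hom K W2 Y" "g = cmp K q2 p2"
    using g unfolding factors_through_def by blast
  have o: "W1 \<in> Ob K" "W2 \<in> Ob K" "X \<in> Ob K" "Y \<in> Ob K" using w1 w2 obX obY by blast+
  obtain P i1 i2 \<pi>1 \<pi>2 where bp: "is_biprod K W1 W2 P i1 i2 \<pi>1 \<pi>2" using biprod_ex[OF o(1,2)] by blast
  have PT: "P \<in> T" using sT bp w1 w2 unfolding subcat_def by blast
  have PU: "P \<in> U" using sU bp w1 w2 unfolding subcat_def by blast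
  have b: "i1 \<in> Hom K W1 P" "i2 \<in> Hom K W2 P" "\<pi>1 \<in> Hom K P W1" "\<pi>2 \<in> Hom K P W2"
     "cmp K \<pi>1 i1 = idm K W1" "cmp K \<pi>2 i2 = idm K W2"
     "cmp K \<pi>1 i2 = mzero K W2 W1" "cmp K \<pi>2 i1 = mzero K W1 W2"
    using bp unfolding is_biprod_def by auto
  define p where "p = madd K (cmp K i1 p1) (cmp K i2 p2)"
  define q where "q = madd K (cmp K q1 \<pi>1) (cmp K q2 \<pi>2)"
  have h1: "cmp K i1 p1 \<in> Hom K X P" "cmp K i2 p2 \<in> Hom K X P" using cmp_hom w1 w2 b by blast+
  have h2: "cmp K q1 \<pi>1 \<in> Hom K P Y" "cmp K q2 \<pi>2 \<in> Hom K P Y" using cmp_hom w1 w2 b by blast+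
  have ph: "p \<in> Hom K X P" using add_hom[OF h1] p_def by simp
  have qh: "q \<in> Hom K P Y" using add_hom[OF h2] q_def by simp
  have qi1: "cmp K q i1 = q1"
  proof -
    have "cmp K q i1 = madd K (cmp K (cmp K q1 \<pi>1) i1) (cmp K (cmp K q2 \<pi>2) i1)"
      using cmp_add_right[OF h2 b(1)] q_def by simp
    also have "\<dots> = madd K q1 (mzero K W1 Y)"
      using cmp_assoc[OF b(1) b(3) w1(3)] cmp_assoc[OF b(1) b(4) w2(3)] b(5) b(8)
        idm_right[OF w1(3)] cmp_zero_right[OF w2(3) o(1)] by simp
    finally show ?thesis using add_zero[OF w1(3)] by simp
  qed
  have qi2: "cmp K q i2 = q2"
  proof -
    have "cmp K q i2 = madd K (cmp K (cmp K q1 \<pi>1) i2) (cmp K (cmp K q2 \<pi>2) i2)"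
      using cmp_add_right[OF h2 b(2)] q_def by simp
    also have "\<dots> = madd K (mzero K W2 Y) q2"
      using cmp_assoc[OF b(2) b(3) w1(3)] cmp_assoc[OF b(2) b(4) w2(3)] b(6) b(7)
        idm_right[OF w2(3)] cmp_zero_right[OF w1(3) o(2)] by simp
    finally show ?thesis using add_zero_left[OF w2(3)] by simp
  qed
  have "cmp K q p = madd K (cmp K q (cmp K i1 p1)) (cmp K q (cmp K i2 p2))"
    using cmp_add_left[OF h1 qh] p_def by simp
  also have "\<dots> = madd K f g"
    using cmp_assoc[OF w1(2) b(1) qh] cmp_assoc[OF w2(2) b(2) qh] qi1 qi2 w1(4) w2(4) by simp
  finally have "madd K f g = cmp K q p" by simp
  thus ?thesis unfolding factors_through_def using PT PU ph qh by blast
qed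

lemma iso_refl: "X \<in> Ob K \<Longrightarrow> isomorphic K X X"
  unfolding isomorphic_def is_iso_def using idm_hom idm_left by blast

end

theorem lemma3p9:
  fixes K :: "('o, 'm) tcat"
    and S T U V :: "'o set"
    and tau :: "'o \<Rightarrow> 'o" and eta :: "'o \<Rightarrow> 'm"
  assumes tri: "triangulated K"
    and twin: "twin_cotorsion_pair K S T U V"
    and adj: "left_adjoint_incl K (T \<inter> U)
               (ext_star K (T \<inter> U) (shift_sub K V)) tau eta"
    and C: "C \<in> Ob K"
    and tr1: "V0 \<in> V" "U0 \<in> U" "dist K V0 U0 C v a c"
    and tr2: "isomorphic K (shO K S0') S0" "S0 \<in> S" "T0 \<in> T" "dist K S0' U0 T0 b t s"
    and tr3: "dist K S0' C Z (cmp K a b) z w"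
  shows "(quot_zero_obj K (T \<inter> U) (tau C) \<longleftrightarrow> Z \<in> T \<inter> U) \<and>
         (Z \<in> T \<inter> U \<longleftrightarrow> C \<in> U)"
proof -
  interpret triangulated K by (rule tri)
  have cpST: "cotorsion_pair K S T" and cpUV: "cotorsion_pair K U V" and eSV: "ext1_zero K S V"
    using twin unfolding twin_cotorsion_pair_def by auto
  have subS: "subcat K S" and subT: "subcat K T" using cpST unfolding cotorsion_pair_def by auto
  have subU: "subcat K U" and subV: "subcat K V" and eUV: "ext1_zero K U V"
    using cpUV unfolding cotorsion_pair_def by auto
  have Vob: "\<And>X. X \<in> V \<Longrightarrow> X \<in> Ob K" using subV unfolding subcat_def by blast
  have SU: "S \<subseteq> U"
  proof
    fix X assume X: "X \<in> S"
    have Xo: "X \<in> Ob K" using subS X unfolding subcat_def by blast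
    show "X \<in> U" using charU[OF cpUV Xo] eSV X unfolding ext1_zero_def by blast
  qed
  obtain Z0 where Z0: "Z0 \<in> T \<inter> U" "is_zero_obj K Z0" using W_zero[OF subT subU] by blast
  have h1: "v \<in> Hom K V0 U0" "a \<in> Hom K U0 C" "c \<in> Hom K C (shO K V0)" using dist_hom tr1(3) by auto
  have h2: "b \<in> Hom K S0' U0" "t \<in> Hom K U0 T0" "s \<in> Hom K T0 (shO K S0')" using dist_hom tr2(4) by auto
  have h3: "z \<in> Hom K C Z" "w \<in> Hom K Z (shO K S0')" using dist_hom tr3 by auto
  have Zo: "Z \<in> Ob K" using obY h3(1) by blast
  have sS0'U: "shO K S0' \<in> U" using SU tr2(1,2) iso_sym subU unfolding subcat_def by blast
  have P3: "Z \<in> U \<Longrightarrow> C \<in> U"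
  proof -
    assume ZU: "Z \<in> U"
    show ?thesis
    proof (rule charU[OF cpUV C])
      fix V' assume V': "V' \<in> V"
      have sV': "shO K V' \<in> Ob K" using sh_obj Vob V' by blast
      show "Hom K C (shO K V') = {mzero K C (shO K V')}"
      proof
        show "Hom K C (shO K V') \<subseteq> {mzero K C (shO K V')}"
        proof
          fix \<phi> assume p: "\<phi> \<in> Hom K C (shO K V')"
          have pa: "cmp K \<phi> a = mzero K U0 (shO K V')"
            using eUV tr1(2) V' cmp_hom[OF h1(2) p] unfolding ext1_zero_def by blast
          have "cmp K \<phi> (cmp K a b) = mzero K S0' (shO K V')"
            using cmp_assoc[OF h2(1) h1(2) p] pa cmp_zero_left[OF h2(1) sV'] by simp
          then obtain \<psi> where q: "\<psi> \<in> Hom K Z (shO K V')" "cmp K \<psi> z = \<phi>"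
            using weak_coker[OF tr3 p] by blast
          have "\<psi> = mzero K Z (shO K V')" using eUV ZU V' q(1) unfolding ext1_zero_def by blast
          thus "\<phi> \<in> {mzero K C (shO K V')}" using q(2) cmp_zero_left[OF h3(1) sV'] by simp
        qed
        show "{mzero K C (shO K V')} \<subseteq> Hom K C (shO K V')" using zero_hom C sV' by blast
      qed
    qed
  qed
  have P12: "C \<in> U \<Longrightarrow> Z \<in> T \<inter> U"
  proof -
    assume CU: "C \<in> U"
    have ZU: "Z \<in> U" using U_ext[OF cpUV rot[OF tr3] CU sS0'U] .
    have V0o: "V0 \<in> Ob K" using Vob tr1(1) by blast
    have shV0: "shO K V0 \<in> Ob K" using sh_obj V0o by blast
    have c0: "c = mzero K C (shO K V0)" using eUV CU tr1(1) h1(3) unfolding ext1_zero_def by blast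
    have tr1r: "dist K U0 C (shO K V0) a c (mneg K (shM K v))" using rot[OF tr1(3)] .
    have ci: "cmp K (idm K (shO K V0)) c = mzero K C (shO K V0)" using idm_left[OF h1(3)] c0 by simp
    obtain \<psi> where ps: "\<psi> \<in> Hom K (shO K U0) (shO K V0)" "cmp K \<psi> (mneg K (shM K v)) = idm K (shO K V0)"
      using weak_coker[OF rot[OF tr1r] idm_hom[OF shV0] ci] by blast
    have tr2r: "dist K (shO K S0') (shO K U0) (shO K T0) (mneg K (shM K b)) (mneg K (shM K t)) (mneg K (shM K s))"
      using rot[OF rot[OF rot[OF tr2(4)]]] .
    have nbh: "mneg K (shM K b) \<in> Hom K (shO K S0') (shO K U0)" using neg_hom sh_hom h2(1) by blast
    have zS0: "Hom K S0 (shO K V0) = {mzero K S0 (shO K V0)}" using eSV tr2(2) tr1(1) unfolding ext1_zero_def by blast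
    have x0: "cmp K \<psi> (mneg K (shM K b)) = mzero K (shO K S0') (shO K V0)"
      using iso_zero_source[OF cmp_hom[OF nbh ps(1)] iso_sym[OF tr2(1)] zS0] .
    obtain \<rho> where rh: "\<rho> \<in> Hom K (shO K T0) (shO K V0)" "cmp K \<rho> (mneg K (shM K t)) = \<psi>"
      using weak_coker[OF tr2r ps(1) x0] by blast
    obtain u v'' where d4: "dist K T0 Z (shO K V0) u v'' (cmp K (shM K t) (mneg K (shM K v)))"
      using TR4[OF tr2(4) tr1r tr3] by blast
    have hu: "u \<in> Hom K T0 Z" "v'' \<in> Hom K Z (shO K V0)" using dist_hom d4 by auto
    have hv: "cmp K (cmp K (shM K t) (mneg K (shM K v))) v'' = mzero K Z (shO K T0)"
      using comp_zero[OF rot[OF d4]] .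
    have shv: "mneg K (shM K v) \<in> Hom K (shO K V0) (shO K U0)" using neg_hom sh_hom h1(1) by blast
    have sht: "shM K t \<in> Hom K (shO K U0) (shO K T0)" using sh_hom h2(2) by blast
    define y where "y = cmp K (mneg K (shM K v)) v''"
    have yh: "y \<in> Hom K Z (shO K U0)" using cmp_hom[OF hu(2) shv] y_def by simp
    have ty: "cmp K (shM K t) y = mzero K Z (shO K T0)" using hv cmp_assoc[OF hu(2) shv sht] y_def by simp
    have T0o: "shO K T0 \<in> Ob K" using obY[OF sht] .
    have v0: "v'' = mzero K Z (shO K V0)"
    proof -
      have "v'' = cmp K (cmp K \<psi> (mneg K (shM K v))) v''" using ps(2) idm_left[OF hu(2)] by simp
      also have "\<dots> = cmp K \<psi> y" using cmp_assoc[OF hu(2) shv ps(1)] y_def by simp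
      also have "\<dots> = cmp K \<rho> (cmp K (mneg K (shM K t)) y)"
        using cmp_assoc[OF yh neg_hom[OF sht] rh(1)] rh(2) by simp
      also have "\<dots> = cmp K \<rho> (mzero K Z (shO K T0))"
        using cmp_neg_left[OF sht yh] ty neg_zero[OF Zo T0o] by simp
      also have "\<dots> = mzero K Z (shO K V0)" using cmp_zero_right[OF rh(1) Zo] .
      finally show ?thesis .
    qed
    have vi: "cmp K v'' (idm K Z) = mzero K Z (shO K V0)" using idm_right[OF hu(2)] v0 by simp
    obtain \<psi>' where q: "\<psi>' \<in> Hom K Z T0" "cmp K u \<psi>' = idm K Z" using weak_ker[OF d4 idm_hom[OF Zo] vi] by blast
    have "Z \<in> T" using retract_in[OF subT tr2(3) q(1) hu(1) q(2)] .
    thus ?thesis using ZU by blast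
  qed
  define Cp where "Cp = ext_star K (T \<inter> U) (shift_sub K V)"
  have adjC: "tau C \<in> Cp" "eta C \<in> Hom K C (tau C)"
    "\<And>X f. X \<in> Cp \<Longrightarrow> f \<in> Hom K C X \<Longrightarrow> \<exists>g \<in> Hom K (tau C) X. quot_eq K (T \<inter> U) C X (cmp K g (eta C)) f \<and>
             (\<forall>g' \<in> Hom K (tau C) X. quot_eq K (T \<inter> U) C X (cmp K g' (eta C)) f
                 \<longrightarrow> quot_eq K (T \<inter> U) (tau C) X g' g)"
    using adj C unfolding left_adjoint_incl_def Cp_def by blast+
  have etah: "eta C \<in> Hom K C (tau C)" using adjC(2) .
  have tCo: "tau C \<in> Ob K" using obY[OF etah] .
  have Z0o: "Z0 \<in> Ob K" using Z0(2) unfolding is_zero_obj_def by blast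
  have P4: "quot_zero_obj K (T \<inter> U) (tau C) \<Longrightarrow> C \<in> U"
  proof -
    assume qz: "quot_zero_obj K (T \<inter> U) (tau C)"
    obtain W1 p0 q0 where w1: "W1 \<in> T \<inter> U" "p0 \<in> Hom K (tau C) W1" "q0 \<in> Hom K W1 (tau C)"
      "madd K (idm K (tau C)) (mneg K (mzero K (tau C) (tau C))) = cmp K q0 p0"
      using qz unfolding quot_zero_obj_def quot_eq_def factors_through_def by blast
    have idq: "idm K (tau C) = cmp K q0 p0"
      using w1(4) neg_zero[OF tCo tCo] add_zero[OF idm_hom[OF tCo]] by simp
    show ?thesis
    proof (rule charU[OF cpUV C])
      fix V' assume V': "V' \<in> V"
      define X where "X = shO K V'"
      have Xo: "X \<in> Ob K" using sh_obj Vob V' X_def by blast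
      show "Hom K C (shO K V') = {mzero K C (shO K V')}"
      proof
        show "Hom K C (shO K V') \<subseteq> {mzero K C (shO K V')}"
        proof
          fix \<phi> assume p: "\<phi> \<in> Hom K C (shO K V')"
          have XCp: "X \<in> Cp" unfolding Cp_def ext_star_def shift_sub_def
            using Z0(1) V' iso_refl[OF Xo] dist_zero_first[OF Xo Z0(2)] X_def by blast
          obtain g where g: "g \<in> Hom K (tau C) X" "quot_eq K (T \<inter> U) C X (cmp K g (eta C)) \<phi>"
            using adjC(3)[OF XCp] p X_def by blast
          obtain W2 p1 q1 where w2: "W2 \<in> T \<inter> U" "p1 \<in> Hom K C W2" "q1 \<in> Hom K W2 X"
            "madd K (cmp K g (eta C)) (mneg K \<phi>) = cmp K q1 p1"
            using g(2) unfolding quot_eq_def factors_through_def by blast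
          have gq0: "cmp K g q0 = mzero K W1 X"
            using eUV w1(1) V' cmp_hom[OF w1(3) g(1)] X_def unfolding ext1_zero_def by blast
          have q10: "q1 = mzero K W2 X" using eUV w2(1) V' w2(3) X_def unfolding ext1_zero_def by blast
          have pe: "cmp K p0 (eta C) \<in> Hom K C W1" using cmp_hom[OF etah w1(2)] .
          have ge: "cmp K g (eta C) = mzero K C X"
          proof -
            have "cmp K g (eta C) = cmp K g (cmp K (cmp K q0 p0) (eta C))" using idq idm_left[OF etah] by simp
            also have "\<dots> = cmp K (cmp K g q0) (cmp K p0 (eta C))"
              using cmp_assoc[OF etah w1(2) w1(3)] cmp_assoc[OF pe w1(3) g(1)] by simp
            also have "\<dots> = mzero K C X" using gq0 cmp_zero_left[OF pe Xo] by simp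
            finally show ?thesis .
          qed
          have "madd K (mzero K C X) (mneg K \<phi>) = mzero K C X"
            using w2(4) ge q10 cmp_zero_left[OF w2(2) Xo] by simp
          hence "mneg K \<phi> = mzero K C X" using add_zero_left neg_hom p X_def by metis
          hence "\<phi> = mzero K C X" using neg_neg[OF p] neg_zero[OF C Xo] X_def by metis
          thus "\<phi> \<in> {mzero K C (shO K V')}" using X_def by simp
        qed
        show "{mzero K C (shO K V')} \<subseteq> Hom K C (shO K V')" using zero_hom C Xo X_def by blast
      qed
    qed
  qed
  have P5: "C \<in> U \<Longrightarrow> quot_zero_obj K (T \<inter> U) (tau C)"
  proof -
    assume CU: "C \<in> U"
    obtain W1 B f' g' h' where w1: "W1 \<in> T \<inter> U" "B \<in> shift_sub K V" and d: "dist K W1 (tau C) B f' g' h'"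
      using adjC(1) unfolding Cp_def ext_star_def by blast
    obtain V1 where V1: "V1 \<in> V" "isomorphic K (shO K V1) B" using w1(2) unfolding shift_sub_def by blast
    have hd: "f' \<in> Hom K W1 (tau C)" "g' \<in> Hom K (tau C) B" using dist_hom d by auto
    have zC: "Hom K C (shO K V1) = {mzero K C (shO K V1)}" using eUV CU V1(1) unfolding ext1_zero_def by blast
    have ge: "cmp K g' (eta C) = mzero K C B" using iso_zero_target[OF cmp_hom[OF etah hd(2)] V1(2) zC] .
    obtain p where p: "p \<in> Hom K C W1" "cmp K f' p = eta C" using weak_ker[OF d etah ge] by blast
    obtain g where g: "g \<in> Hom K (tau C) (tau C)"
      "\<forall>g' \<in> Hom K (tau C) (tau C). quot_eq K (T \<inter> U) C (tau C) (cmp K g' (eta C)) (eta C)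
                 \<longrightarrow> quot_eq K (T \<inter> U) (tau C) (tau C) g' g"
      using adjC(3)[OF adjC(1) etah] by blast
    have zC0: "mzero K C Z0 \<in> Hom K C Z0" "mzero K Z0 (tau C) \<in> Hom K Z0 (tau C)" using zero_hom C Z0o tCo by auto
    have q1: "quot_eq K (T \<inter> U) C (tau C) (cmp K (idm K (tau C)) (eta C)) (eta C)"
    proof -
      have "madd K (cmp K (idm K (tau C)) (eta C)) (mneg K (eta C)) = cmp K (mzero K Z0 (tau C)) (mzero K C Z0)"
        using idm_left[OF etah] add_neg[OF etah] cmp_zero_left[OF zC0(1) tCo] by simp
      thus ?thesis unfolding quot_eq_def factors_through_def using Z0(1) zC0 by blast
    qed
    have q2: "quot_eq K (T \<inter> U) C (tau C) (cmp K (mzero K (tau C) (tau C)) (eta C)) (eta C)"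
    proof -
      have "madd K (cmp K (mzero K (tau C) (tau C)) (eta C)) (mneg K (eta C)) = cmp K (mneg K f') p"
        using cmp_zero_left[OF etah tCo] add_zero_left[OF neg_hom[OF etah]] cmp_neg_left[OF hd(1) p(1)] p(2) by simp
      thus ?thesis unfolding quot_eq_def factors_through_def using w1(1) p(1) neg_hom[OF hd(1)] by blast
    qed
    have r1: "quot_eq K (T \<inter> U) (tau C) (tau C) (idm K (tau C)) g" using g(2) q1 idm_hom[OF tCo] by blast
    have r2: "quot_eq K (T \<inter> U) (tau C) (tau C) (mzero K (tau C) (tau C)) g" using g(2) q2 zero_hom[OF tCo tCo] by blast
    have f1: "factors_through K (T \<inter> U) (tau C) (tau C) (madd K (idm K (tau C)) (mneg K g))"
      using r1 unfolding quot_eq_def .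
    obtain W3 p2 q2 where w3: "W3 \<in> T \<inter> U" "p2 \<in> Hom K (tau C) W3" "q2 \<in> Hom K W3 (tau C)"
      "madd K (mzero K (tau C) (tau C)) (mneg K g) = cmp K q2 p2"
      using r2 unfolding quot_eq_def factors_through_def by blast
    have "mneg K g = cmp K q2 p2" using w3(4) add_zero_left[OF neg_hom[OF g(1)]] by simp
    hence "g = cmp K (mneg K q2) p2" using neg_neg[OF g(1)] cmp_neg_left[OF w3(3) w3(2)] by metis
    hence f2: "factors_through K (T \<inter> U) (tau C) (tau C) g"
      unfolding factors_through_def using w3 neg_hom[OF w3(3)] by blast
    have e: "madd K (madd K (idm K (tau C)) (mneg K g)) g = idm K (tau C)"
      using add_assoc[OF idm_hom[OF tCo] neg_hom[OF g(1)] g(1)] add_comm[OF neg_hom[OF g(1)] g(1)]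
        add_neg[OF g(1)] add_zero[OF idm_hom[OF tCo]] by simp
    have "factors_through K (T \<inter> U) (tau C) (tau C) (idm K (tau C))"
      using factor_add[OF subT subU f1 f2] e by simp
    thus ?thesis unfolding quot_zero_obj_def quot_eq_def
      using tCo neg_zero[OF tCo tCo] add_zero[OF idm_hom[OF tCo]] by simp
  qed
  show ?thesis using P3 P12 P4 P5 by blast
qed

end
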